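(* Let $n\ge1$ and let $U\subseteq\mathbb{R}^{1\times n}$ be a non-empty open set. For every sequence of nowhere constant continuous functions $f_k:U\to\mathbb{R}^{1\times n}$, $k\ge1$, the set $$\bigcap_{k\ge1}f_k^{-1}(\mathscr{L}^{*}_{1,n})\cap\mathscr{L}_{1,n}$$ is a dense $G_\delta$ subset of $U$. In particular there is a dense $G_\delta$ set $\Lambda\subseteq\mathscr{L}_{1,n}\cap U$ (dense in $U$) with $f_k(A)\in\mathscr{L}^*_{1,n}$ for all $A\in\Lambda$ and all $k\ge1$.
   Context: $\Vert\cdot\Vert$ is the supremum norm; a real $m\times n$ matrix $A$ is a Liouville matrix if $A\mathbf{q}-\mathbf{p}\neq\mathbf{0}$ for all nonzero $(\mathbf{q},\mathbf{p})\in\mathbb{Z}^n\times\mathbb{Z}^m$ and for every $N$ there exist $\mathbf{p}\in\mathbb{Z}^m$, $\mathbf{q}\in\mathbb{Z}^n\setminus\{\mathbf{0}\}$ with $\Vert A\mathbf{q}-\mathbf{p}\Vert<\Vert\mathbf{q}\Vert^{-N}$; $\mathscr{L}_{m,n}$ is the set of these. $\mathscr{L}^*_{m,n}$ is the set of $A\in\mathbb{R}^{m\times n}\setminus\mathbb{Q}^{m\times n}$ such that for every $N$ there exist $\mathbf{p}\in\mathbb{Z}^m$, $\mathbf{q}\in\mathbb{Z}^n\setminus\{\mathbf{0}\}$ with $\Vert A\mathbf{q}-\mathbf{p}\Vert<\Vert\mathbf{q}\Vert^{-N}$. A function on an open set $U$ is nowhere constant if it is not constant on any non-empty open subset of $U$.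 $\mathbb{R}^{1\times n}\cong\mathbb{R}^n$. *)

theory Defs
  imports "HOL-Analysis.Analysis"
begin

text \<open>A real 1 x n matrix is identified with a vector in real^'n; A q is the inner product.
  The supremum norm is the library's infnorm.\<close>

definition int_vec :: "real^'n \<Rightarrow> bool" where
  "int_vec q \<longleftrightarrow> (\<forall>i. q $ i \<in> \<int>)"

definition rat_vec :: "real^'n \<Rightarrow> bool" where
  "rat_vec A \<longleftrightarrow> (\<forall>i. A $ i \<in> \<rat>)"

definition liouville_approx :: "real^'n \<Rightarrow> bool" where
  "liouville_approx A \<longleftrightarrow>
     (\<forall>N::nat. \<exists>p::real. \<exists>q::real^'n. p \<in> \<int> \<and> int_vec q \<and> q \<noteq> 0 \<and>
        \<bar>A \<bullet> q - p\<bar> < inverse (infnorm q ^ N))"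

definition Liouville :: "(real^'n) set" where
  "Liouville = {A. (\<forall>q p. int_vec q \<and> p \<in> \<int> \<and> (q, p) \<noteq> (0, 0) \<longrightarrow> A \<bullet> q - p \<noteq> 0)
                   \<and> liouville_approx A}"

definition Liouville_star :: "(real^'n) set" where
  "Liouville_star = {A. \<not> rat_vec A \<and> liouville_approx A}"

definition nowhere_constant_on :: "('a::topological_space \<Rightarrow> 'b) \<Rightarrow> 'a set \<Rightarrow> bool" where
  "nowhere_constant_on f U \<longleftrightarrow>
     (\<forall>V. open V \<and> V \<subseteq> U \<and> V \<noteq> {} \<longrightarrow> \<not> (\<exists>c. \<forall>x\<in>V. f x = c))"

end

theory Submission imports Defs begin

definition WW :: "nat \<Rightarrow> (real^'n) set" where
  "WW N = {A. \<exists>p::real. \<exists>q::real^'n. p \<in> \<int> \<and> int_vec q \<and> q \<noteq> 0 \<and>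
        \<bar>A \<bullet> q - p\<bar> < inverse (infnorm q ^ N)}"

lemma la_WW: "liouville_approx A \<longleftrightarrow> (\<forall>N. A \<in> WW N)"
  unfolding liouville_approx_def WW_def by auto

lemma open_WW: "open (WW N :: (real^'n) set)"
proof (subst open_subopen, intro ballI)
  fix A :: "real^'n" assume "A \<in> WW N"
  then obtain p q where pq: "p \<in> \<int>" "int_vec q" "q \<noteq> 0" "\<bar>A \<bullet> q - p\<bar> < inverse (infnorm q ^ N)"
    unfolding WW_def by blast
  let ?T = "{B::real^'n. \<bar>B \<bullet> q - p\<bar> < inverse (infnorm q ^ N)}"
  have "open ?T" by (intro open_Collect_less continuous_intros)
  moreover have "?T \<subseteq> WW N" using pq unfolding WW_def by blast
  ultimately show "\<exists>T. open T \<and> A \<in> T \<and> T \<subseteq> WW N" using pq by blast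
qed

lemma rat_coord_WW:
  fixes A :: "real^'n"
  assumes "A $ i \<in> \<rat>" shows "A \<in> WW N"
proof -
  obtain a b where ab: "A $ i = of_int a / of_int b" "b > 0"
    using assms by (metis Rats_cases')
  define q :: "real^'n" where "q = (\<chi> j. if j = i then of_int b else 0)"
  have "A \<bullet> q = A $ i * of_int b"
    unfolding q_def inner_vec_def by (simp add: if_distrib cong: if_cong)
  also have "\<dots> = of_int a" using ab by simp
  finally have e: "A \<bullet> q = of_int a" .
  have "int_vec q" unfolding int_vec_def q_def by auto
  moreover have "q \<noteq> 0" using ab by (auto simp: q_def vec_eq_iff intro!: exI[of _ i])
  moreover have "infnorm q > 0" using \<open>q \<noteq> 0\<close> by (simp add: infnorm_pos_lt)
  ultimately show ?thesis unfolding WW_def using e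
    by (intro CollectI exI[of _ "of_int a"] exI[of _ q]) auto
qed

lemma not_const_near:
  fixes g :: "real^'n \<Rightarrow> 'b"
  assumes "open U" "nowhere_constant_on g U" "x \<in> U" "e > 0"
  shows "\<exists>y\<in>U. dist y x < e \<and> g y \<noteq> a"
proof -
  obtain d where d: "d > 0" "ball x d \<subseteq> U" using assms by (meson open_contains_ball)
  let ?V = "ball x (min d e)"
  have "open ?V" "?V \<subseteq> U" "?V \<noteq> {}" using d assms by auto
  then have "\<not> (\<forall>y\<in>?V. g y = a)" using assms(2) unfolding nowhere_constant_on_def by blast
  then obtain y where y: "y \<in> ?V" "g y \<noteq> a" by blast
  then have "y \<in> U" using \<open>?V \<subseteq> U\<close> by blast
  then show ?thesis using y by (auto simp: dist_commute)
qed

lemma rat_near: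
  fixes g :: "real^'n \<Rightarrow> real^'m"
  assumes "open U" "continuous_on U g" "nowhere_constant_on g U" "x \<in> U" "e > 0"
  shows "\<exists>y\<in>U. dist y x < e \<and> (\<exists>i. g y $ i \<in> \<rat>)"
proof -
  obtain d where d: "d > 0" "ball x d \<subseteq> U" using assms by (meson open_contains_ball)
  let ?V = "ball x (min d e)"
  have "open ?V" "?V \<subseteq> U" "?V \<noteq> {}" using d assms by auto
  then have "\<not> (\<forall>y\<in>?V. g y = g x)" using assms(3) unfolding nowhere_constant_on_def by blast
  then obtain y where y: "y \<in> ?V" "g y \<noteq> g x" by blast
  then obtain i where i: "g y $ i \<noteq> g x $ i" by (auto simp: vec_eq_iff)
  have xV: "x \<in> ?V" using d assms by auto
  have "continuous_on ?V (\<lambda>w. g w $ i)"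
    by (intro continuous_intros continuous_on_subset[OF assms(2)] \<open>?V \<subseteq> U\<close>)
  then have conn: "connected ((\<lambda>w. g w $ i) ` ?V)"
    by (intro connected_continuous_image) auto
  obtain r where r: "r \<in> \<rat>" "min (g y $ i) (g x $ i) < r" "r < max (g y $ i) (g x $ i)"
  proof -
    have "min (g y $ i) (g x $ i) < max (g y $ i) (g x $ i)" using i by linarith
    then show ?thesis using Rats_dense_in_real that by blast
  qed
  have iv: "\<And>a b z. a \<in> (\<lambda>w. g w $ i) ` ?V \<Longrightarrow> b \<in> (\<lambda>w. g w $ i) ` ?V \<Longrightarrow> a \<le> z \<Longrightarrow> z \<le> b \<Longrightarrow> z \<in> (\<lambda>w. g w $ i) ` ?V"
    using conn unfolding connected_iff_interval by blast
  have m1: "g y $ i \<in> (\<lambda>w. g w $ i) ` ?V" using y by blast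
  have m2: "g x $ i \<in> (\<lambda>w. g w $ i) ` ?V" using xV by blast
  have "r \<in> (\<lambda>w. g w $ i) ` ?V"
  proof (cases "g y $ i < g x $ i")
    case True
    then have "g y $ i \<le> r" "r \<le> g x $ i" using r by auto
    then show ?thesis using iv[OF m1 m2] by blast
  next
    case False
    then have "g x $ i \<le> r" "r \<le> g y $ i" using r by auto
    then show ?thesis using iv[OF m2 m1] by blast
  qed
  then obtain w where "w \<in> ?V" "g w $ i = r" by blast
  then show ?thesis using d r by (intro bexI[of _ w]) (auto simp: dist_commute)
qed

lemma hyp_near:
  fixes q :: "real^'n"
  assumes "open U" "x \<in> U" "e > 0" "q \<noteq> 0"
  shows "\<exists>y\<in>U. dist y x < e \<and> y \<bullet> q - p \<noteq> 0"
proof (cases "x \<bullet> q - p = 0")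
  case False then show ?thesis using assms by force
next
  case True
  obtain d where d: "d > 0" "ball x d \<subseteq> U" using assms by (meson open_contains_ball)
  define t where "t = min d e / (2 * norm q)"
  have nq: "norm q > 0" using assms by simp
  have t: "t > 0" using d assms nq by (simp add: t_def)
  have "dist (x + t *\<^sub>R q) x = t * norm q" using t by (simp add: dist_norm)
  also have "\<dots> = min d e / 2" using nq by (simp add: t_def)
  finally have dd0: "dist (x + t *\<^sub>R q) x = min d e / 2" .
  have "min d e > 0" using d assms by simp
  then have dd: "dist (x + t *\<^sub>R q) x < min d e" using dd0 by linarith
  have "(x + t *\<^sub>R q) \<bullet> q - p = t * (q \<bullet> q)" using True by (simp add: inner_add_left)
  moreover have "q \<bullet> q > 0" using assms by simp
  ultimately have "(x + t *\<^sub>R q) \<bullet> q - p \<noteq> 0" using t by simp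
  moreover have "x + t *\<^sub>R q \<in> U" using dd d by (auto simp: dist_commute)
  ultimately show ?thesis using dd by force
qed


lemma dense_near:
  fixes T :: "(real^'n) set"
  assumes "T \<subseteq> U" "\<And>x e. x \<in> U \<Longrightarrow> e > 0 \<Longrightarrow> \<exists>y\<in>T. dist y x < e"
  shows "U \<subseteq> closure T"
  using assms by (auto simp: closure_approachable)

lemma countable_intvec: "countable {q::real^'n. int_vec q}"
proof (rule countable_subset)
  show "{q::real^'n. int_vec q} \<subseteq> range (\<lambda>g::'n\<Rightarrow>int. \<chi> i. of_int (g i))"
  proof
    fix q :: "real^'n" assume "q \<in> {q. int_vec q}"
    then have "\<forall>i. \<exists>z::int. q $ i = of_int z" unfolding int_vec_def by (auto elim: Ints_cases)
    then obtain g where "\<forall>i. q $ i = of_int (g i)" by metis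
    then have "q = (\<chi> i. of_int (g i))" by (simp add: vec_eq_iff)
    then show "q \<in> range (\<lambda>g::'n\<Rightarrow>int. \<chi> i. of_int (g i))" by blast
  qed
qed simp

lemma countable_ratvec: "countable {q::real^'n. rat_vec q}"
proof (rule countable_subset)
  show "{q::real^'n. rat_vec q} \<subseteq> range (\<lambda>g::'n\<Rightarrow>rat. \<chi> i. of_rat (g i))"
  proof
    fix q :: "real^'n" assume "q \<in> {q. rat_vec q}"
    then have "\<forall>i. \<exists>z::rat. q $ i = of_rat z" unfolding rat_vec_def by (auto elim: Rats_cases)
    then obtain g where "\<forall>i. q $ i = of_rat (g i)" by metis
    then have "q = (\<chi> i. of_rat (g i))" by (simp add: vec_eq_iff)
    then show "q \<in> range (\<lambda>g::'n\<Rightarrow>rat. \<chi> i. of_rat (g i))" by blast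
  qed
qed simp

lemma nowhere_constant_id: "nowhere_constant_on (\<lambda>x::real^'n. x) U"
  unfolding nowhere_constant_on_def
proof (intro allI impI notI)
  fix V :: "(real^'n) set" assume V: "open V \<and> V \<subseteq> U \<and> V \<noteq> {}" and "\<exists>c. \<forall>x\<in>V. x = c"
  then obtain c where "\<forall>x\<in>V. x = c" by blast
  then have "V = {c}" using V by auto
  then show False using V not_open_singleton by metis
qed

theorem theorem5:
  fixes U :: "(real^'n) set" and f :: "nat \<Rightarrow> real^'n \<Rightarrow> real^'n"
  assumes "open U" and "U \<noteq> {}"
    and "\<And>k. k \<ge> 1 \<Longrightarrow> continuous_on U (f k)"
    and "\<And>k. k \<ge> 1 \<Longrightarrow> nowhere_constant_on (f k) U"
  shows "let S = {A \<in> U. (\<forall>k\<ge>1. f k A \<in> Liouville_star) \<and> A \<in> Liouville}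
         in gdelta_in (top_of_set U) S \<and> U \<subseteq> closure S"
proof -
  define S where "S = {A \<in> U. (\<forall>k\<ge>1. f k A \<in> Liouville_star) \<and> A \<in> Liouville}"
  define Iqp :: "((real^'n) \<times> real) set" where "Iqp = {(q,p). int_vec q \<and> p \<in> \<int> \<and> (q,p) \<noteq> (0,0)}"
  define RV :: "(real^'n) set" where "RV = {a. rat_vec a}"
  define G1 where "G1 = (\<lambda>(q,p). {A\<in>U. A \<bullet> q - p \<noteq> 0}) ` Iqp"
  define G2 where "G2 = (\<lambda>N. U \<inter> WW N) ` (UNIV :: nat set)"
  define G3 where "G3 = (\<lambda>(k,N). {x\<in>U. f k x \<in> WW N}) ` ({k. k \<ge> 1} \<times> (UNIV :: nat set))"
  define G4 where "G4 = (\<lambda>(k,a). {x\<in>U. f k x \<noteq> a}) ` ({k. k \<ge> 1} \<times> RV)"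
  define G where "G = G1 \<union> G2 \<union> G3 \<union> G4"
  have cG: "countable G"
  proof -
    have "Iqp \<subseteq> {q. int_vec q} \<times> \<int>" unfolding Iqp_def by auto
    then have "countable Iqp" using countable_intvec countable_int
      by (meson countable_SIGMA countable_subset)
    moreover have "countable RV" unfolding RV_def by (rule countable_ratvec)
    ultimately show ?thesis unfolding G_def G1_def G2_def G3_def G4_def by auto
  qed
  have GU: "T \<subseteq> U \<and> openin (top_of_set U) T \<and> U \<subseteq> closure T" if TG: "T \<in> G" for T
  proof -
    consider "T \<in> G1" | "T \<in> G2" | "T \<in> G3" | "T \<in> G4" using TG unfolding G_def by blast
    then show ?thesis
    proof cases
      case 1
      then obtain q p where qp: "(q,p) \<in> Iqp" and T: "T = U \<inter> {A. A \<bullet> q - p \<noteq> 0}"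
        unfolding G1_def by auto
      have "open {A::real^'n. A \<bullet> q - p \<noteq> 0}" by (intro open_Collect_neq continuous_intros)
      then have o: "openin (top_of_set U) T" unfolding T by blast
      have "U \<subseteq> closure T"
      proof (rule dense_near)
        fix x e assume x: "x \<in> U" and e: "(e::real) > 0"
        show "\<exists>y\<in>T. dist y x < e"
        proof (cases "q = 0")
          case True
          then have "p \<noteq> 0" using qp unfolding Iqp_def by auto
          then show ?thesis using True x e unfolding T by (intro bexI[of _ x]) auto
        next
          case False
          then show ?thesis using hyp_near[OF assms(1) x e False, of p] unfolding T by auto
        qed
      qed (auto simp: T)
      then show ?thesis using o T by auto
    next
      case 2
      then obtain N where T: "T = U \<inter> WW N" unfolding G2_def by auto
      have o: "openin (top_of_set U) T" unfolding T using open_WW by blast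
      have "U \<subseteq> closure T"
      proof (rule dense_near)
        fix x e assume x: "x \<in> U" and e: "(e::real) > 0"
        have "continuous_on U (\<lambda>x::real^'n. x)" by (rule continuous_on_id)
        from rat_near[OF assms(1) this nowhere_constant_id x e]
        show "\<exists>y\<in>T. dist y x < e" unfolding T using rat_coord_WW by blast
      qed (auto simp: T)
      then show ?thesis using o T by auto
    next
      case 3
      then obtain k N where k: "k \<ge> 1" and T: "T = {x\<in>U. f k x \<in> WW N}" unfolding G3_def by auto
      have "open (f k -` WW N \<inter> U)"
        using continuous_on_open_vimage[OF assms(1)] assms(3)[OF k] open_WW by blast
      moreover have "T = f k -` WW N \<inter> U" unfolding T by auto
      ultimately have o: "openin (top_of_set U) T" by (simp add: open_subset)
      have "U \<subseteq> closure T"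
      proof (rule dense_near)
        fix x e assume x: "x \<in> U" and e: "(e::real) > 0"
        from rat_near[OF assms(1) assms(3)[OF k] assms(4)[OF k] x e]
        show "\<exists>y\<in>T. dist y x < e" unfolding T using rat_coord_WW by blast
      qed (auto simp: T)
      then show ?thesis using o T by auto
    next
      case 4
      then obtain k a where k: "k \<ge> 1" and T: "T = {x\<in>U. f k x \<noteq> a}" unfolding G4_def by auto
      have "open (f k -` (- {a}) \<inter> U)"
        using continuous_on_open_vimage[OF assms(1)] assms(3)[OF k] by blast
      moreover have "T = f k -` (- {a}) \<inter> U" unfolding T by auto
      ultimately have o: "openin (top_of_set U) T" by (simp add: open_subset)
      have "U \<subseteq> closure T"
      proof (rule dense_near)
        fix x e assume x: "x \<in> U" and e: "(e::real) > 0"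
        from not_const_near[OF assms(1) assms(4)[OF k] x e, of a]
        show "\<exists>y\<in>T. dist y x < e" unfolding T by blast
      qed (auto simp: T)
      then show ?thesis using o T by auto
    qed
  qed
  have GS: "\<Inter>G = S"
  proof
    show "\<Inter>G \<subseteq> S"
    proof
      fix A assume A: "A \<in> \<Inter>G"
      have AU: "A \<in> U" using A unfolding G_def G2_def by auto
      have "liouville_approx A" unfolding la_WW using A unfolding G_def G2_def by auto
      moreover have "A \<bullet> q - p \<noteq> 0" if "int_vec q" "p \<in> \<int>" "(q, p) \<noteq> (0, 0)" for q p
      proof -
        have "(q,p) \<in> Iqp" using that unfolding Iqp_def by auto
        then have "{A\<in>U. A \<bullet> q - p \<noteq> 0} \<in> G" unfolding G_def G1_def by force
        then show ?thesis using A by auto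
      qed
      ultimately have "A \<in> Liouville" unfolding Liouville_def by auto
      moreover have "f k A \<in> Liouville_star" if k: "k \<ge> 1" for k
      proof -
        have "f k A \<in> WW N" for N
        proof -
          have "{x\<in>U. f k x \<in> WW N} \<in> G" unfolding G_def G3_def using k by force
          then show ?thesis using A by auto
        qed
        then have "liouville_approx (f k A)" unfolding la_WW by auto
        moreover have "\<not> rat_vec (f k A)"
        proof
          assume "rat_vec (f k A)"
          then have "{x\<in>U. f k x \<noteq> f k A} \<in> G" unfolding G_def G4_def RV_def using k by force
          then show False using A by auto
        qed
        ultimately show ?thesis unfolding Liouville_star_def by auto
      qed
      ultimately show "A \<in> S" unfolding S_def using AU by auto
    qed
  next
    show "S \<subseteq> \<Inter>G"
    proof
      fix A assume A: "A \<in> S"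
      then have AU: "A \<in> U" and L: "A \<in> Liouville" and LS: "\<And>k. k \<ge> 1 \<Longrightarrow> f k A \<in> Liouville_star"
        unfolding S_def by auto
      show "A \<in> \<Inter>G"
        unfolding G_def G1_def G2_def G3_def G4_def
      proof (intro InterI, elim UnE)
        fix T assume "T \<in> (\<lambda>(q, p). {A \<in> U. A \<bullet> q - p \<noteq> 0}) ` Iqp"
        then show "A \<in> T" using AU L unfolding Iqp_def Liouville_def by auto
      next
        fix T assume "T \<in> (\<lambda>N. U \<inter> WW N) ` UNIV"
        then show "A \<in> T" using AU L unfolding Liouville_def la_WW by auto
      next
        fix T assume "T \<in> (\<lambda>(k, N). {x \<in> U. f k x \<in> WW N}) ` ({k. 1 \<le> k} \<times> UNIV)"
        then show "A \<in> T" using AU LS unfolding Liouville_star_def la_WW by auto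
      next
        fix T assume "T \<in> (\<lambda>(k, a). {x \<in> U. f k x \<noteq> a}) ` ({k. 1 \<le> k} \<times> RV)"
        then show "A \<in> T" using AU LS unfolding Liouville_star_def RV_def by auto
      qed
    qed
  qed
  have "G \<noteq> {}" unfolding G_def G2_def by auto
  have gd: "gdelta_in (top_of_set U) S"
    unfolding GS[symmetric]
    by (intro gdelta_in_Inter cG \<open>G \<noteq> {}\<close> open_imp_gdelta_in) (use GU in blast)
  have X: "locally_compact_space (top_of_set U) \<and> regular_space (top_of_set U)"
    by (intro conjI locally_compact_space_open_subset regular_space_subtopology
          regular_space_euclidean locally_compact_space_euclidean disjI2) (simp add: assms(1))
  have "(top_of_set U) closure_of \<Inter>G = topspace (top_of_set U)"
  proof (rule Baire_category)
    fix T assume "T \<in> G"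
    then have "T \<subseteq> U" "openin (top_of_set U) T" "U \<subseteq> closure T" using GU by auto
    then show "openin (top_of_set U) T \<and> (top_of_set U) closure_of T = topspace (top_of_set U)"
      by (auto simp: closure_of_subtopology Int_absorb1)
  qed (use X cG in auto)
  then have "U \<inter> closure (U \<inter> S) = U" by (simp add: GS closure_of_subtopology)
  then have "U \<subseteq> closure S" by (metis Int_lower2 closure_mono inf.absorb_iff1 subset_trans)
  with gd show ?thesis unfolding S_def[symmetric] Let_def by blast
qed

end
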